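(* Let $\Delta$, $k$, and $n$ be natural numbers. Let $\mathcal{G}$ be a $\Delta$-temporally connected temporal graph on $n$ vertices, and let $T$ be a spanning tree of the underlying graph of $\mathcal{G}$. If $\mathcal{G}$ contains at least $\lceil 18k \ln(6k) \rceil\left(\Delta+ \frac{n}{k}\right)$ snapshots that are $k$-edge-deficient with respect to $T$, then $\mathcal{G}$ can be explored from any vertex.
   Context: A temporal graph $\mathcal{G}$ is an ordered sequence $\langle G_1,\dots,G_L\rangle$ of graphs on a common vertex set; the $G_i$ are its snapshots and $L$ is its lifetime. Its underlying graph is the static graph on the same vertex set whose edges are those appearing in at least one snapshot. For $1\le t\le t'\le L$, $\mathcal{G}_{[t,t']}=\langle G_t,\dots,G_{t'}\rangle$. A temporal walk from $v$ to $u$ is a sequence $(v=v_0,e_1,v_1,\dots,e_\ell,v_\ell=u)$ with strictly increasing time steps $1\le t_1<\dots<t_\ell\le L$ such that each edge $e_i=\{v_{i-1},v_i\}$ is present in $G_{t_i}$; its length is $\ell$. $\mathcal{G}$ can be explored from $v$ in at most $\ell$ steps if there is a temporal walk of length at most $\ell$ starting at $v$ and visiting all vertices; it can be explored from $v$ if it can be explored from $v$ in at most $L$ steps. $\mathcal{G}$ is temporally connected if for every ordered pair of vertices $(v,u)$ there is a temporal walk from $v$ to $u$; it is $\Delta$-temporally connected if $\mathcal{G}_{[t,t+\Delta-1]}$ is temporally connected for every $t\in[L-\Delta+1]$. For a static graph $F$ on the same vertex set, a snapshot $G$ is $k$-edge-deficient with respect to $F$ if all but at most $k$ edges of $F$ are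 present in $G$. *)

theory Defs
  imports Complex_Main
begin

definition temporal_graph :: "'a set \<Rightarrow> nat \<Rightarrow> (nat \<Rightarrow> 'a set set) \<Rightarrow> bool" where
  "temporal_graph V L E \<longleftrightarrow> finite V \<and>
     (\<forall>i\<in>{1..L}. \<forall>e\<in>E i. e \<subseteq> V \<and> card e = 2)"

definition underlying_edges :: "nat \<Rightarrow> (nat \<Rightarrow> 'a set set) \<Rightarrow> 'a set set" where
  "underlying_edges L E = (\<Union>i\<in>{1..L}. E i)"

definition temporal_walk ::
  "(nat \<Rightarrow> 'a set set) \<Rightarrow> nat \<Rightarrow> nat \<Rightarrow> 'a list \<Rightarrow> nat list \<Rightarrow> bool" where
  "temporal_walk E a b vs ts \<longleftrightarrow> vs \<noteq> [] \<and> length vs = length ts + 1 \<and>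
     sorted_wrt (<) ts \<and> (\<forall>t\<in>set ts. a \<le> t \<and> t \<le> b) \<and>
     (\<forall>i<length ts. {vs ! i, vs ! Suc i} \<in> E (ts ! i))"

definition temporally_connected_on ::
  "'a set \<Rightarrow> (nat \<Rightarrow> 'a set set) \<Rightarrow> nat \<Rightarrow> nat \<Rightarrow> bool" where
  "temporally_connected_on V E a b \<longleftrightarrow>
     (\<forall>v\<in>V. \<forall>u\<in>V. \<exists>vs ts. temporal_walk E a b vs ts \<and> hd vs = v \<and> last vs = u)"

definition delta_temporally_connected ::
  "nat \<Rightarrow> 'a set \<Rightarrow> nat \<Rightarrow> (nat \<Rightarrow> 'a set set) \<Rightarrow> bool" where
  "delta_temporally_connected \<Delta> V L E \<longleftrightarrow>
     (\<forall>t. 1 \<le> t \<and> t + \<Delta> \<le> L + 1 \<longrightarrow> temporally_connected_on V E t (t + \<Delta> - 1))"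

definition graph_connected :: "'a set \<Rightarrow> 'a set set \<Rightarrow> bool" where
  "graph_connected V F \<longleftrightarrow>
     (\<forall>u\<in>V. \<forall>v\<in>V. (u, v) \<in> ({(x, y). {x, y} \<in> F})\<^sup>*)"

text \<open>A tree on V: a connected graph on V in which no edge lies on a cycle,
  i.e. removing any edge disconnects its endpoints (acyclicity).\<close>

definition is_tree :: "'a set \<Rightarrow> 'a set set \<Rightarrow> bool" where
  "is_tree V F \<longleftrightarrow> V \<noteq> {} \<and> (\<forall>e\<in>F. e \<subseteq> V \<and> card e = 2) \<and> graph_connected V F \<and>
     (\<forall>x y. {x, y} \<in> F \<longrightarrow> (x, y) \<notin> ({(a, b). {a, b} \<in> F - {{x, y}}})\<^sup>*)"

definition spanning_tree_of :: "'a set \<Rightarrow> 'a set set \<Rightarrow> 'a set set \<Rightarrow> bool" where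
  "spanning_tree_of V H T \<longleftrightarrow> T \<subseteq> H \<and> is_tree V T"

definition edge_deficient :: "nat \<Rightarrow> 'a set set \<Rightarrow> 'a set set \<Rightarrow> bool" where
  "edge_deficient k F G \<longleftrightarrow> card (F - G) \<le> k"

definition explorable_from :: "'a set \<Rightarrow> nat \<Rightarrow> (nat \<Rightarrow> 'a set set) \<Rightarrow> 'a \<Rightarrow> bool" where
  "explorable_from V L E v \<longleftrightarrow>
     (\<exists>vs ts. temporal_walk E 1 L vs ts \<and> hd vs = v \<and> set vs = V \<and> length ts \<le> L)"

end

theory Submission
  imports Defs
begin


inductive reach :: "(nat \<Rightarrow> 'a set set) \<Rightarrow> 'a \<Rightarrow> nat \<Rightarrow> 'a \<Rightarrow> nat \<Rightarrow> 'a set \<Rightarrow> bool"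
  for E where
  rrefl: "s \<le> t \<Longrightarrow> reach E u s u t {u}"
| rstep: "reach E u s z t S \<Longrightarrow> {z, y} \<in> E t' \<Longrightarrow> t < t' \<Longrightarrow> t' \<le> t'' \<Longrightarrow> reach E u s y t'' (insert y S)"

lemma reach_le: "reach E u s z t S \<Longrightarrow> s \<le> t"
  by (induction rule: reach.induct) auto

lemma reach_end_in: "reach E u s z t S \<Longrightarrow> z \<in> S"
  by (induction rule: reach.induct) auto

lemma reach_start_in: "reach E u s z t S \<Longrightarrow> u \<in> S"
  by (induction rule: reach.induct) auto

lemma reach_mono_up: "reach E u s z t S \<Longrightarrow> t \<le> t2 \<Longrightarrow> reach E u s z t2 S"
  by (cases rule: reach.cases) (auto intro: reach.intros)

lemma reach_mono_down: "reach E u s z t S \<Longrightarrow> s' \<le> s \<Longrightarrow> reach E u s' z t S"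
  by (induction rule: reach.induct) (auto intro: reach.intros)

lemma reach_trans: "reach E z t y t2 S2 \<Longrightarrow> reach E u s z t S \<Longrightarrow> reach E u s y t2 (S \<union> S2)"
proof (induction rule: reach.induct)
  case (rrefl t2 z)
  then show ?case using reach_mono_up reach_end_in
    by (metis insert_absorb sup_bot.right_neutral Un_insert_right)
next
  case (rstep z t y' t1 S2 y t' t'')
  then show ?case using reach.rstep[of E u s y' t1 "S \<union> S2" y t' t''] by auto
qed

lemma reach_to_walk:
  "reach E u s z t S \<Longrightarrow> \<exists>vs ts. temporal_walk E (Suc s) t vs ts \<and> hd vs = u \<and> last vs = z \<and> set vs = S"
proof (induction rule: reach.induct)
  case (rrefl s t u)
  then show ?case by (intro exI[of _ "[u]"] exI[of _ "[]"]) (auto simp: temporal_walk_def)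
next
  case (rstep u s z t S y t' t'')
  then obtain vs ts where w: "temporal_walk E (Suc s) t vs ts" "hd vs = u" "last vs = z" "set vs = S"
    by blast
  have st: "s \<le> t" by (rule reach_le[OF rstep.hyps(1)])
  have len: "length vs = length ts + 1" "vs \<noteq> []" using w(1) by (auto simp: temporal_walk_def)
  have "temporal_walk E (Suc s) t'' (vs @ [y]) (ts @ [t'])"
    unfolding temporal_walk_def
  proof (intro conjI allI impI ballI)
    show "vs @ [y] \<noteq> []" by simp
    show "length (vs @ [y]) = length (ts @ [t']) + 1" using len by simp
    show "sorted_wrt (<) (ts @ [t'])" using w(1) rstep.hyps(3)
      by (auto simp: temporal_walk_def sorted_wrt_append)
    fix x assume "x \<in> set (ts @ [t'])"
    then show "Suc s \<le> x" "x \<le> t''" using w(1) rstep.hyps(3,4) st by (auto simp: temporal_walk_def)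
  next
    fix i assume i: "i < length (ts @ [t'])"
    show "{(vs @ [y]) ! i, (vs @ [y]) ! Suc i} \<in> E ((ts @ [t']) ! i)"
    proof (cases "i < length ts")
      case True
      then show ?thesis using w(1) len by (auto simp: temporal_walk_def nth_append)
    next
      case False
      then have "i = length ts" using i by simp
      moreover have "vs ! length ts = z" using w(3) len by (simp add: last_conv_nth)
      ultimately show ?thesis using rstep.hyps(2) len by (auto simp: nth_append)
    qed
  qed
  then show ?case using w len by (intro exI[of _ "vs @ [y]"] exI[of _ "ts @ [t']"]) auto
qed

lemma walk_to_reach:
  assumes tw: "temporal_walk E a b vs ts" and a: "1 \<le> a" and ab: "a \<le> Suc b"
  shows "reach E (hd vs) (a - 1) (last vs) b (set vs)"
proof -
  have len: "length vs = length ts + 1" "vs \<noteq> []" and so: "sorted_wrt (<) ts"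
    and rng: "\<forall>t\<in>set ts. a \<le> t \<and> t \<le> b"
    and ed: "\<forall>i<length ts. {vs ! i, vs ! Suc i} \<in> E (ts ! i)"
    using tw by (auto simp: temporal_walk_def)
  have "j \<le> length ts \<Longrightarrow> reach E (hd vs) (a - 1) (vs ! j) (if j = 0 then a - 1 else ts ! (j - 1))
          (set (take (Suc j) vs))" for j
  proof (induction j)
    case 0
    then show ?case using len by (auto simp: hd_conv_nth take_Suc intro: rrefl)
  next
    case (Suc j)
    have jl: "j < length ts" using Suc by simp
    have e: "{vs ! j, vs ! Suc j} \<in> E (ts ! j)" using ed jl by simp
    have lt: "(if j = 0 then a - 1 else ts ! (j - 1)) < ts ! j"
    proof (cases "j = 0")
      case True
      then show ?thesis using rng jl a nth_mem[OF jl] by fastforce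
    next
      case False
      then show ?thesis using sorted_wrt_nth_less[OF so, of "j - 1" j] jl by simp
    qed
    have tk: "set (take (Suc (Suc j)) vs) = insert (vs ! Suc j) (set (take (Suc j) vs))"
      using len jl by (simp add: take_Suc_conv_app_nth insert_commute)
    show ?case using rstep[OF Suc.IH[OF Suc_leD[OF Suc.prems]] e lt order.refl] tk by simp
  qed
  from this[of "length ts"] have r: "reach E (hd vs) (a - 1) (last vs) (if length ts = 0 then a - 1 else ts ! (length ts - 1)) (set vs)"
    using len by (simp add: last_conv_nth)
  have "(if length ts = 0 then a - 1 else ts ! (length ts - 1)) \<le> b"
    using rng a ab len by (auto simp: last_conv_nth)
  then show ?thesis using reach_mono_up[OF r] by blast
qed



fun edges_of :: "'a list \<Rightarrow> 'a set list" where
  "edges_of (x # y # zs) = {x, y} # edges_of (y # zs)"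
| "edges_of _ = []"

lemma edges_of_append: "edges_of (xs @ a # ys) = edges_of (xs @ [a]) @ edges_of (a # ys)"
proof (induction xs)
  case Nil
  then show ?case by simp
next
  case (Cons x xs)
  then show ?case by (cases xs) auto
qed

lemma length_edges_of: "length (edges_of w) = length w - 1"
  by (induction w rule: edges_of.induct) auto

lemma nth_edges_of: "p < length w - 1 \<Longrightarrow> edges_of w ! p = {w ! p, w ! Suc p}"
proof (induction w arbitrary: p rule: edges_of.induct)
  case (1 x y zs)
  then show ?case by (cases p) auto
qed auto

lemma edges_of_subset: "e \<in> set (edges_of w) \<Longrightarrow> e \<subseteq> set w"
  by (induction w rule: edges_of.induct) auto

lemma leave_set:
  assumes "(x, y) \<in> R\<^sup>*" "x \<in> S" "y \<notin> S"
  shows "\<exists>a b. a \<in> S \<and> b \<notin> S \<and> (a, b) \<in> R"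
  using assms by (induction rule: rtrancl_induct) auto

definition good_tour :: "'a set \<Rightarrow> 'a set set \<Rightarrow> 'a list \<Rightarrow> bool" where
  "good_tour S T w \<longleftrightarrow> set w = S \<and> length w = 2 * card S - 1 \<and> set (edges_of w) \<subseteq> T
     \<and> (\<forall>e. count_list (edges_of w) e \<le> 2)"

lemma tour_grow:
  assumes gt: "good_tour S T w" and a: "a \<in> S" and b: "b \<notin> S" and ab: "{a, b} \<in> T"
    and fin: "finite S"
  shows "\<exists>w'. good_tour (insert b S) T w'"
proof -
  have "a \<in> set w" using gt a by (simp add: good_tour_def)
  then obtain xs ys where w: "w = xs @ a # ys" by (meson split_list)
  have ew: "edges_of w = edges_of (xs @ [a]) @ edges_of (a # ys)"
    using w edges_of_append by metis
  have ew2: "edges_of (xs @ a # b # a # ys) = edges_of (xs @ [a]) @ {a, b} # {b, a} # edges_of (a # ys)"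
    using edges_of_append[of xs a "b # a # ys"] by simp
  have bnot: "b \<notin> set w" using gt b by (simp add: good_tour_def)
  have ab_not: "{a, b} \<notin> set (edges_of w)" using edges_of_subset bnot by blast
  have cnt0: "count_list (edges_of (xs @ [a])) {a, b} + count_list (edges_of (a # ys)) {a, b} = 0"
    using ab_not ew by (simp add: count_list_0_iff)
  have "set (xs @ a # b # a # ys) = insert b S" using gt w by (auto simp: good_tour_def)
  moreover have "length (xs @ a # b # a # ys) = 2 * card (insert b S) - 1"
    using gt w b fin by (auto simp: good_tour_def)
  moreover have "set (edges_of (xs @ a # b # a # ys)) \<subseteq> T"
    using gt ew ew2 ab by (auto simp: good_tour_def insert_commute)
  moreover have "count_list (edges_of (xs @ a # b # a # ys)) e \<le> 2" for e
  proof (cases "e = {a, b}")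
    case True
    then show ?thesis using cnt0 ew2 by (simp add: insert_commute)
  next
    case False
    then have "count_list (edges_of (xs @ a # b # a # ys)) e = count_list (edges_of w) e"
      using ew ew2 by (simp add: insert_commute)
    then show ?thesis using gt by (simp add: good_tour_def)
  qed
  ultimately have "good_tour (insert b S) T (xs @ a # b # a # ys)" unfolding good_tour_def by blast
  then show ?thesis by blast
qed

lemma tour_exists:
  assumes fin: "finite V" and ne: "V \<noteq> {}" and conn: "graph_connected V T"
    and edges: "\<forall>e\<in>T. e \<subseteq> V \<and> card e = 2"
  shows "\<exists>w. good_tour V T w"
proof -
  obtain v0 where v0: "v0 \<in> V" using ne by blast
  have grow: "d < card V \<Longrightarrow> \<exists>S w. S \<subseteq> V \<and> card S = Suc d \<and> good_tour S T w" for d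
  proof (induction d)
    case 0
    have "good_tour {v0} T [v0]" by (simp add: good_tour_def)
    then show ?case using v0 by (intro exI[of _ "{v0}"]) auto
  next
    case (Suc d)
    then obtain S w where S: "S \<subseteq> V" "card S = Suc d" "good_tour S T w" by auto
    have fS: "finite S" using S(1) fin finite_subset by blast
    have "S \<noteq> V" using S(2) Suc.prems by auto
    then obtain y where y: "y \<in> V" "y \<notin> S" using S(1) by blast
    have "S \<noteq> {}" using S(2) by auto
    then obtain x where x: "x \<in> S" by blast
    have "(x, y) \<in> {(x, y). {x, y} \<in> T}\<^sup>*" using conn x y S(1) by (auto simp: graph_connected_def)
    from leave_set[OF this x y(2)] obtain a b where ab: "a \<in> S" "b \<notin> S" "(a, b) \<in> {(x, y). {x, y} \<in> T}"
      by blast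
    have bV: "b \<in> V" using ab(3) edges by auto
    have "{a, b} \<in> T" using ab(3) by simp
    then obtain w' where "good_tour (insert b S) T w'" using tour_grow[OF S(3) ab(1,2) _ fS] by blast
    moreover have "insert b S \<subseteq> V" using S(1) bV by blast
    moreover have "card (insert b S) = Suc (Suc d)" using S(2) ab(2) fS by simp
    ultimately show ?case by blast
  qed
  have cV: "0 < card V" using ne fin by (simp add: card_gt_0_iff)
  from grow[of "card V - 1"] obtain S w where "S \<subseteq> V" "card S = card V" "good_tour S T w"
    using cV by auto
  moreover then have "S = V" using fin by (simp add: card_subset_eq)
  ultimately show ?thesis by blast
qed



fun wpos :: "(nat \<Rightarrow> 'a set set) \<Rightarrow> 'a list \<Rightarrow> (nat \<Rightarrow> nat) \<Rightarrow> nat \<Rightarrow> nat \<Rightarrow> nat" where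
  "wpos E w tm x 0 = x"
| "wpos E w tm x (Suc j) = (if wpos E w tm x j < length w - 1 \<and>
      {w ! wpos E w tm x j, w ! Suc (wpos E w tm x j)} \<in> E (tm j)
    then Suc (wpos E w tm x j) else wpos E w tm x j)"

lemma wpos_Suc_ge: "wpos E w tm x j \<le> wpos E w tm x (Suc j)"
  by simp

lemma wpos_mono: "j \<le> j' \<Longrightarrow> wpos E w tm x j \<le> wpos E w tm x j'"
  using lift_Suc_mono_le[of "wpos E w tm x"] wpos_Suc_ge by blast

lemma wpos_ge: "x \<le> wpos E w tm x j"
  using wpos_mono[of 0 j] by simp

lemma wpos_le: "x \<le> length w - 1 \<Longrightarrow> wpos E w tm x j \<le> length w - 1"
  by (induction j) auto

lemma wpos_count:
  "wpos E w tm x j = x + card {i. i < j \<and> wpos E w tm x i < length w - 1 \<and>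
      {w ! wpos E w tm x i, w ! Suc (wpos E w tm x i)} \<in> E (tm i)}"
proof (induction j)
  case 0
  then show ?case by simp
next
  case (Suc j)
  let ?P = "\<lambda>i. wpos E w tm x i < length w - 1 \<and>
      {w ! wpos E w tm x i, w ! Suc (wpos E w tm x i)} \<in> E (tm i)"
  let ?A = "{i. i < j \<and> ?P i}"
  let ?A' = "{i. i < Suc j \<and> ?P i}"
  show ?case
  proof (cases "?P j")
    case True
    then have "?A' = insert j ?A" by (auto simp: less_Suc_eq)
    then have c: "card ?A' = Suc (card ?A)" by simp
    have "wpos E w tm x (Suc j) = Suc (wpos E w tm x j)" using True by simp
    then show ?thesis using c Suc.IH by linarith
  next
    case False
    then have "?A' = ?A" by (auto simp: less_Suc_eq)
    then have c: "card ?A' = card ?A" by simp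
    have "wpos E w tm x (Suc j) = wpos E w tm x j" using False by simp
    then show ?thesis using c Suc.IH by linarith
  qed
qed

lemma wpos_stalls:
  assumes "wpos E w tm x W < length w - 1"
  shows "W = (wpos E w tm x W - x) + card {j. j < W \<and> edges_of w ! wpos E w tm x j \<notin> E (tm j)}"
proof -
  let ?N = "length w - 1"
  have lt: "j \<le> W \<Longrightarrow> wpos E w tm x j < ?N" for j using wpos_mono[of j W E w tm x] assms by simp
  have ed: "j < W \<Longrightarrow> edges_of w ! wpos E w tm x j = {w ! wpos E w tm x j, w ! Suc (wpos E w tm x j)}" for j
    using lt[of j] nth_edges_of by simp
  let ?A = "{i. i < W \<and> wpos E w tm x i < ?N \<and> {w ! wpos E w tm x i, w ! Suc (wpos E w tm x i)} \<in> E (tm i)}"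
  let ?B = "{j. j < W \<and> edges_of w ! wpos E w tm x j \<notin> E (tm j)}"
  have un: "?A \<union> ?B = {..<W}" using lt ed by auto
  have di: "?A \<inter> ?B = {}" using ed by auto
  have "card ?A + card ?B = W"
  proof -
    have "finite ?A" "finite ?B" by auto
    then have "card (?A \<union> ?B) = card ?A + card ?B" using di by (simp add: card_Un_disjoint)
    then show ?thesis using un by simp
  qed
  moreover have "wpos E w tm x W - x = card ?A" using wpos_count[of E w tm x W] by simp
  ultimately show ?thesis by simp
qed

lemma card_filter_sum: "finite A \<Longrightarrow> card {x \<in> A. P x} = (\<Sum>x\<in>A. if P x then 1 else 0 :: nat)"
  by (simp add: sum.If_cases Int_def conj_commute)

lemma blocked_positions:
  assumes finT: "finite T" and cnt: "\<forall>e. count_list (edges_of w) e \<le> 2"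
    and sub: "set (edges_of w) \<subseteq> T" and good: "card (T - G) \<le> k"
  shows "card {p. p < length w - 1 \<and> edges_of w ! p \<notin> G} \<le> 2 * k"
proof -
  let ?N = "length w - 1"
  have c: "card {p. p < ?N \<and> edges_of w ! p = e} \<le> 2" for e
  proof -
    have "card {p. p < ?N \<and> edges_of w ! p = e} = count_list (edges_of w) e"
      by (simp add: count_list_eq_length_filter length_filter_conv_card length_edges_of eq_commute)
    then show ?thesis using cnt by simp
  qed
  have "{p. p < ?N \<and> edges_of w ! p \<notin> G} \<subseteq> (\<Union>e\<in>T - G. {p. p < ?N \<and> edges_of w ! p = e})"
  proof
    fix p assume p: "p \<in> {p. p < ?N \<and> edges_of w ! p \<notin> G}"
    then have "edges_of w ! p \<in> set (edges_of w)" by (simp add: length_edges_of)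
    then show "p \<in> (\<Union>e\<in>T - G. {p. p < ?N \<and> edges_of w ! p = e})" using p sub by auto
  qed
  moreover have "finite (\<Union>e\<in>T - G. {p. p < ?N \<and> edges_of w ! p = e})" using finT by auto
  ultimately have "card {p. p < ?N \<and> edges_of w ! p \<notin> G} \<le> card (\<Union>e\<in>T - G. {p. p < ?N \<and> edges_of w ! p = e})"
    by (intro card_mono) auto
  also have "\<dots> \<le> (\<Sum>e\<in>T - G. card {p. p < ?N \<and> edges_of w ! p = e})"
    using finT by (intro card_UN_le) auto
  also have "\<dots> \<le> card (T - G) * 2"
    using sum_bounded_above[of "T - G" "\<lambda>e. card {p. p < ?N \<and> edges_of w ! p = e}" 2] c by simp
  also have "\<dots> \<le> 2 * k" using good by simp
  finally show ?thesis .
qed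

lemma stall_bound:
  assumes finT: "finite T" and cnt: "\<forall>e. count_list (edges_of w) e \<le> 2"
    and sub: "set (edges_of w) \<subseteq> T" and good: "\<forall>j<W. card (T - E (tm j)) \<le> k"
    and XN: "\<forall>h\<in>X. wpos E w tm h W < length w - 1"
    and chain: "\<forall>h\<in>X. \<forall>h'\<in>X. h < h' \<longrightarrow> wpos E w tm h W < h'"
  shows "W * card X + card X \<le> 2 * k * W + (length w - 1)"
proof -
  let ?N = "length w - 1"
  let ?F = "\<lambda>h. wpos E w tm h W"
  let ?bl = "\<lambda>h j. edges_of w ! wpos E w tm h j \<notin> E (tm j)"
  have XsubN: "X \<subseteq> {..<?N}" using XN wpos_ge[of _ E w tm W] by (auto intro: le_less_trans)
  have fX: "finite X" using XsubN finite_subset by blast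
  have stall: "h \<in> X \<Longrightarrow> W = (?F h - h) + card {j. j < W \<and> ?bl h j}" for h
    using wpos_stalls XN by blast
  have posmono: "h \<in> X \<Longrightarrow> h' \<in> X \<Longrightarrow> h < h' \<Longrightarrow> wpos E w tm h j < wpos E w tm h' j" if "j \<le> W" for h h' j
  proof -
    assume a: "h \<in> X" "h' \<in> X" "h < h'"
    have "wpos E w tm h j \<le> ?F h" using wpos_mono that by blast
    also have "\<dots> < h'" using chain a by blast
    also have "h' \<le> wpos E w tm h' j" by (rule wpos_ge)
    finally show ?thesis .
  qed
  have inj: "j \<le> W \<Longrightarrow> inj_on (\<lambda>h. wpos E w tm h j) X" for j
  proof (rule inj_onI)
    fix h h' assume j: "j \<le> W" and a: "h \<in> X" "h' \<in> X" "wpos E w tm h j = wpos E w tm h' j"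
    show "h = h'"
    proof (rule ccontr)
      assume "h \<noteq> h'"
      then have "h < h' \<or> h' < h" by arith
      then show False using posmono[OF j] a by (metis less_irrefl)
    qed
  qed
  have perj: "j < W \<Longrightarrow> card {h \<in> X. ?bl h j} \<le> 2 * k" for j
  proof -
    assume j: "j < W"
    have "card {h \<in> X. ?bl h j} = card ((\<lambda>h. wpos E w tm h j) ` {h \<in> X. ?bl h j})"
      using inj[of j] j by (intro card_image[symmetric]) (auto intro: inj_on_subset)
    also have "\<dots> \<le> card {p. p < ?N \<and> edges_of w ! p \<notin> E (tm j)}"
    proof (intro card_mono)
      show "finite {p. p < ?N \<and> edges_of w ! p \<notin> E (tm j)}" by simp
      show "(\<lambda>h. wpos E w tm h j) ` {h \<in> X. ?bl h j} \<subseteq> {p. p < ?N \<and> edges_of w ! p \<notin> E (tm j)}"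
      proof
        fix p assume "p \<in> (\<lambda>h. wpos E w tm h j) ` {h \<in> X. ?bl h j}"
        then obtain h where h: "h \<in> X" "?bl h j" "p = wpos E w tm h j" by blast
        have "p \<le> ?F h" using h(3) wpos_mono j by (metis less_imp_le)
        then have "p < ?N" using XN h(1) by (meson le_less_trans)
        then show "p \<in> {p. p < ?N \<and> edges_of w ! p \<notin> E (tm j)}" using h by simp
      qed
    qed
    also have "\<dots> \<le> 2 * k" using blocked_positions[OF finT cnt sub] good j by blast
    finally show ?thesis .
  qed
  have "(\<Sum>h\<in>X. card {j. j < W \<and> ?bl h j}) = (\<Sum>h\<in>X. \<Sum>j<W. if ?bl h j then 1 else 0)"
    using card_filter_sum[of "{..<W}"] by (intro sum.cong) (auto simp: lessThan_def)
  also have "\<dots> = (\<Sum>j<W. \<Sum>h\<in>X. if ?bl h j then 1 else 0)"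
    by (rule sum.swap)
  also have "\<dots> = (\<Sum>j<W. card {h \<in> X. ?bl h j})"
    using card_filter_sum[OF fX] by simp
  also have "\<dots> \<le> (\<Sum>j<W. 2 * k)"
    using perj by (intro sum_mono) auto
  also have "\<dots> = 2 * k * W" by simp
  finally have S1: "(\<Sum>h\<in>X. card {j. j < W \<and> ?bl h j}) \<le> 2 * k * W" .
  have disj: "(\<Sum>h\<in>X. card {h..?F h}) \<le> ?N"
  proof -
    have "(\<Sum>h\<in>X. card {h..?F h}) = card (\<Union>h\<in>X. {h..?F h})"
    proof (rule card_UN_disjoint[symmetric])
      show "finite X" by (rule fX)
      show "\<forall>i\<in>X. finite {i..?F i}" by simp
      show "\<forall>i\<in>X. \<forall>j\<in>X. i \<noteq> j \<longrightarrow> {i..?F i} \<inter> {j..?F j} = {}"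
      proof (intro ballI impI)
        fix i j assume a: "i \<in> X" "j \<in> X" "i \<noteq> j"
        then have "i < j \<or> j < i" by arith
        then show "{i..?F i} \<inter> {j..?F j} = {}" using chain a by fastforce
      qed
    qed
    also have "\<dots> \<le> card {..<?N}"
      using XN by (intro card_mono) (auto intro: le_less_trans)
    finally show ?thesis by simp
  qed
  have "(\<Sum>h\<in>X. card {h..?F h}) = (\<Sum>h\<in>X. (?F h - h) + 1)"
    using wpos_ge[of _ E w tm W] by (intro sum.cong) (auto simp: Suc_diff_le)
  also have "\<dots> = (\<Sum>h\<in>X. (?F h - h)) + card X" by (simp only: sum.distrib card_eq_sum)
  finally have "(\<Sum>h\<in>X. card {h..?F h}) = (\<Sum>h\<in>X. (?F h - h)) + card X" .
  with disj have S2: "(\<Sum>h\<in>X. (?F h - h)) + card X \<le> ?N" by simp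
  have "W * card X = (\<Sum>h\<in>X. W)" by simp
  also have "\<dots> = (\<Sum>h\<in>X. (?F h - h) + card {j. j < W \<and> ?bl h j})"
    using stall by (intro sum.cong) auto
  also have "\<dots> = (\<Sum>h\<in>X. (?F h - h)) + (\<Sum>h\<in>X. card {j. j < W \<and> ?bl h j})"
    by (rule sum.distrib)
  finally have "W * card X = (\<Sum>h\<in>X. (?F h - h)) + (\<Sum>h\<in>X. card {j. j < W \<and> ?bl h j})" .
  then show ?thesis using S1 S2 by simp
qed



lemma walker_reach:
  assumes tmono: "\<And>i j. i < j \<Longrightarrow> j < W \<Longrightarrow> tm i < tm j"
    and base: "0 < W \<Longrightarrow> base < tm 0"
  shows "j \<le> W \<Longrightarrow> \<exists>S. reach E (w ! x) base (w ! wpos E w tm x j) (if j = 0 then base else tm (j - 1)) S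
          \<and> (\<forall>p. x \<le> p \<and> p \<le> wpos E w tm x j \<longrightarrow> w ! p \<in> S)"
proof (induction j)
  case 0
  then show ?case by (auto intro: rrefl)
next
  case (Suc j)
  then obtain S where S: "reach E (w ! x) base (w ! wpos E w tm x j) (if j = 0 then base else tm (j - 1)) S"
    "\<forall>p. x \<le> p \<and> p \<le> wpos E w tm x j \<longrightarrow> w ! p \<in> S" by auto
  have lt: "(if j = 0 then base else tm (j - 1)) < tm j"
    using Suc.prems tmono base by auto
  let ?p = "wpos E w tm x j"
  show ?case
  proof (cases "?p < length w - 1 \<and> {w ! ?p, w ! Suc ?p} \<in> E (tm j)")
    case True
    then have eq: "wpos E w tm x (Suc j) = Suc ?p" by simp
    have "reach E (w ! x) base (w ! Suc ?p) (tm j) (insert (w ! Suc ?p) S)"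
      using rstep[OF S(1) _ lt order.refl] True by simp
    moreover have "\<forall>p. x \<le> p \<and> p \<le> Suc ?p \<longrightarrow> w ! p \<in> insert (w ! Suc ?p) S"
      using S(2) by (auto simp: le_Suc_eq)
    ultimately show ?thesis unfolding eq by auto
  next
    case False
    then have eq: "wpos E w tm x (Suc j) = ?p" by simp
    have "reach E (w ! x) base (w ! ?p) (tm j) S"
      using reach_mono_up[OF S(1)] lt by simp
    then show ?thesis using S(2) unfolding eq by auto
  qed
qed

lemma greedy:
  fixes F :: "nat \<Rightarrow> nat \<Rightarrow> nat"
  assumes Fge: "\<And>r y. y \<le> F r y"
    and bad: "\<And>r X. r \<in> A \<Longrightarrow> (\<forall>h\<in>X. F r h < N) \<Longrightarrow> (\<forall>h\<in>X. \<forall>h'\<in>X. h < h' \<longrightarrow> F r h < h') \<Longrightarrow> card X < R"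
    and fin: "finite A" and ne: "A \<noteq> {}" and cardR: "card Hs + card A = R"
    and Hx: "\<forall>h\<in>Hs. h < x" and HF: "\<forall>r\<in>A. \<forall>h\<in>Hs. F r h < x"
    and Hc: "\<forall>r\<in>A. \<forall>h\<in>Hs. \<forall>h'\<in>Hs. h < h' \<longrightarrow> F r h < h'"
  shows "\<exists>st. (\<forall>r. st r \<le> N) \<and> (\<forall>p. x \<le> p \<and> p \<le> N \<longrightarrow> (\<exists>r\<in>A. st r \<le> p \<and> p \<le> F r (st r)))"
  using assms
proof (induction "card A" arbitrary: A Hs x rule: less_induct)
  case less
  show ?case
  proof (cases "N < x")
    case True
    then show ?thesis by (intro exI[of _ "\<lambda>_. 0"]) auto
  next
    case False
    then have xN: "x \<le> N" by simp
    define m where "m = Max ((\<lambda>r. F r x) ` A)"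
    have "m \<in> (\<lambda>r. F r x) ` A" unfolding m_def using less.prems by (intro Max_in) auto
    then obtain r0 where r0: "r0 \<in> A" "F r0 x = m" by auto
    have rmax: "\<forall>r\<in>A. F r x \<le> F r0 x" unfolding r0(2) m_def using less.prems by auto
    show ?thesis
    proof (cases "N \<le> F r0 x")
      case True
      have "\<forall>p. x \<le> p \<and> p \<le> N \<longrightarrow> (\<exists>r\<in>A. x \<le> p \<and> p \<le> F r x)"
        using r0(1) True le_trans by blast
      then show ?thesis using xN by (intro exI[of _ "\<lambda>_. x"]) simp
    next
      case False
      then have FN: "F r0 x < N" by simp
      have finHs: "finite Hs" using less.prems(3,6) by (metis finite_nat_set_iff_bounded)
      have xHs: "x \<notin> Hs" using less.prems(6) by blast
      show ?thesis
      proof (cases "A = {r0}")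
        case True
        let ?X = "insert x Hs"
        have c1: "\<forall>h\<in>?X. F r0 h < N"
        proof
          fix h assume "h \<in> ?X"
          then show "F r0 h < N"
          proof
            assume "h = x" then show ?thesis using FN by simp
          next
            assume "h \<in> Hs" then show ?thesis using less.prems(7) r0(1) xN by (meson less_le_trans)
          qed
        qed
        have c2: "\<forall>h\<in>?X. \<forall>h'\<in>?X. h < h' \<longrightarrow> F r0 h < h'"
        proof (intro ballI impI)
          fix h h' assume a: "h \<in> ?X" "h' \<in> ?X" "h < h'"
          show "F r0 h < h'"
          proof (cases "h' = x")
            case True
            then have "h \<in> Hs" using a by auto
            then show ?thesis using True less.prems(7) r0(1) by blast
          next
            case False
            then have h': "h' \<in> Hs" using a by auto
            then have "h \<noteq> x" using a(3) less.prems(6) by auto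
            then have "h \<in> Hs" using a by auto
            then show ?thesis using h' a(3) less.prems(8) r0(1) by blast
          qed
        qed
        have "card ?X < R" using less.prems(2)[OF r0(1) c1 c2] .
        moreover have "card ?X = R" using less.prems(5) True finHs xHs by simp
        ultimately show ?thesis by simp
      next
        case False
        let ?A = "A - {r0}"
        let ?H = "insert x Hs"
        let ?x = "Suc (F r0 x)"
        have ne': "?A \<noteq> {}" using False r0(1) by blast
        have lt: "card ?A < card A" using r0(1) less.prems(3) by (meson card_Diff1_less)
        have cR: "card ?H + card ?A = R"
        proof -
          have "card ?A = card A - 1" using r0(1) by (simp add: card_Diff_singleton)
          moreover have "0 < card A" using less.prems(3,4) by (simp add: card_gt_0_iff)
          moreover have "card ?H = Suc (card Hs)" using finHs xHs by simp
          ultimately show ?thesis using less.prems(5) by linarith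
        qed
        have fx: "x \<le> F r0 x" by (rule Fge)
        have h1: "\<forall>h\<in>?H. h < ?x" using less.prems(6) fx by auto
        have h2: "\<forall>r\<in>?A. \<forall>h\<in>?H. F r h < ?x"
        proof (intro ballI)
          fix r h assume r: "r \<in> ?A" and h: "h \<in> ?H"
          have rA: "r \<in> A" using r by simp
          show "F r h < ?x"
          proof (cases "h = x")
            case True
            then show ?thesis using rmax rA by (simp add: le_imp_less_Suc)
          next
            case False
            then have "h \<in> Hs" using h by simp
            then have "F r h < x" using less.prems(7) rA by blast
            then show ?thesis using fx by simp
          qed
        qed
        have h3: "\<forall>r\<in>?A. \<forall>h\<in>?H. \<forall>h'\<in>?H. h < h' \<longrightarrow> F r h < h'"
        proof (intro ballI impI)
          fix r h h' assume r: "r \<in> ?A" and a: "h \<in> ?H" "h' \<in> ?H" "h < h'"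
          have rA: "r \<in> A" using r by simp
          show "F r h < h'"
          proof (cases "h' = x")
            case True
            then have "h \<in> Hs" using a by auto
            then show ?thesis using True less.prems(7) rA by blast
          next
            case False
            then have h': "h' \<in> Hs" using a by auto
            then have "h \<noteq> x" using a(3) less.prems(6) by auto
            then have "h \<in> Hs" using a by auto
            then show ?thesis using h' a(3) less.prems(8) rA by blast
          qed
        qed
        have bad': "card X < R" if "r \<in> ?A" "\<forall>h\<in>X. F r h < N" "\<forall>h\<in>X. \<forall>h'\<in>X. h < h' \<longrightarrow> F r h < h'" for r X
        proof -
          have "r \<in> A" using that(1) by simp
          then show ?thesis using less.prems(2) that(2,3) by simp
        qed
        have finA': "finite ?A" using less.prems(3) by simp
        have "\<exists>st. (\<forall>r. st r \<le> N) \<and> (\<forall>p. ?x \<le> p \<and> p \<le> N \<longrightarrow> (\<exists>r\<in>?A. st r \<le> p \<and> p \<le> F r (st r)))"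
          by (rule less.hyps[OF lt less.prems(1) bad' finA' ne' cR h1 h2 h3])
        then obtain st where st: "\<forall>r. st r \<le> N" "\<forall>p. ?x \<le> p \<and> p \<le> N \<longrightarrow> (\<exists>r\<in>?A. st r \<le> p \<and> p \<le> F r (st r))"
          by blast
        let ?st = "st(r0 := x)"
        have "\<forall>r. ?st r \<le> N" using st(1) xN by simp
        moreover have "\<forall>p. x \<le> p \<and> p \<le> N \<longrightarrow> (\<exists>r\<in>A. ?st r \<le> p \<and> p \<le> F r (?st r))"
        proof (intro allI impI)
          fix p assume p: "x \<le> p \<and> p \<le> N"
          show "\<exists>r\<in>A. ?st r \<le> p \<and> p \<le> F r (?st r)"
          proof (cases "p \<le> F r0 x")
            case True
            then show ?thesis using r0(1) p by (intro bexI[of _ r0]) auto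
          next
            case False
            then have "?x \<le> p" by simp
            then obtain r where "r \<in> ?A" "st r \<le> p \<and> p \<le> F r (st r)" using st(2) p by blast
            then show ?thesis by (intro bexI[of _ r]) auto
          qed
        qed
        ultimately show ?thesis by blast
      qed
    qed
  qed
qed



lemma enum_props:
  assumes fin: "finite G"
  shows "\<And>i j. i < j \<Longrightarrow> j < card G \<Longrightarrow> sorted_list_of_set G ! i < sorted_list_of_set G ! j"
    and "\<And>i. i < card G \<Longrightarrow> sorted_list_of_set G ! i \<in> G"
proof -
  have s: "sorted_wrt (<) (sorted_list_of_set G)" by (rule strict_sorted_list_of_set)
  have l: "length (sorted_list_of_set G) = card G" by simp
  show "\<And>i j. i < j \<Longrightarrow> j < card G \<Longrightarrow> sorted_list_of_set G ! i < sorted_list_of_set G ! j"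
    using sorted_wrt_nth_less[OF s] l by simp
  show "\<And>i. i < card G \<Longrightarrow> sorted_list_of_set G ! i \<in> G"
    using l fin by (metis nth_mem set_sorted_list_of_set)
qed

lemma strict_mono_add:
  fixes g :: "nat \<Rightarrow> nat"
  assumes "\<And>i j. i < j \<Longrightarrow> j < M \<Longrightarrow> g i < g j"
  shows "i + d < M \<Longrightarrow> g i + d \<le> g (i + d)"
proof (induction d)
  case 0
  then show ?case by simp
next
  case (Suc d)
  have "g (i + d) < g (i + Suc d)" using assms Suc.prems by simp
  then show ?case using Suc by simp
qed

lemma walk_in_V:
  assumes tg: "temporal_graph V L E" and tw: "temporal_walk E 1 L vs ts" and h: "hd vs \<in> V"
  shows "set vs \<subseteq> V"
proof
  fix y assume "y \<in> set vs"
  then obtain i where i: "i < length vs" "vs ! i = y" by (meson in_set_conv_nth)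
  have len: "length vs = length ts + 1" "vs \<noteq> []" using tw by (auto simp: temporal_walk_def)
  show "y \<in> V"
  proof (cases i)
    case 0
    then show ?thesis using i h len by (simp add: hd_conv_nth)
  next
    case (Suc i')
    then have i': "i' < length ts" using i len by simp
    then have e: "{vs ! i', vs ! i} \<in> E (ts ! i')" using tw Suc by (auto simp: temporal_walk_def)
    have "ts ! i' \<in> {1..L}" using tw i' nth_mem[OF i'] by (auto simp: temporal_walk_def)
    then have "\<forall>e\<in>E (ts ! i'). e \<subseteq> V" using tg unfolding temporal_graph_def by blast
    then have "{vs ! i', vs ! i} \<subseteq> V" using e by blast
    then show ?thesis using i by simp
  qed
qed

lemma walk_len:
  assumes tw: "temporal_walk E 1 L vs ts"
  shows "length ts \<le> L"
proof -
  have d: "distinct ts" using tw by (auto simp: temporal_walk_def strict_sorted_iff)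
  have "set ts \<subseteq> {1..L}" using tw by (auto simp: temporal_walk_def)
  then have "card (set ts) \<le> card {1..L}" by (intro card_mono) auto
  then show ?thesis using distinct_card[OF d] by simp
qed

lemma walk_weaken:
  "temporal_walk E a b vs ts \<Longrightarrow> b \<le> b' \<Longrightarrow> temporal_walk E a b' vs ts"
  by (auto simp: temporal_walk_def)

lemma budget:
  fixes k \<Delta> n M :: nat
  assumes k: "1 \<le> k" and D: "1 \<le> \<Delta>"
    and h: "real M \<ge> real_of_int \<lceil>18 * real k * ln (6 * real k)\<rceil> * (real \<Delta> + real n / real k)"
  shows "4 * k * (\<Delta> + (n div k + 1)) \<le> M"
proof -
  have kr: "(1::real) \<le> real k" using k by simp
  have "exp 1 \<le> (6 * real k)" using exp_le kr by linarith
  then have ln1: "1 \<le> ln (6 * real k)" using ln_ge_iff[of "6 * real k" 1] kr by simp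
  have c: "18 * real k \<le> real_of_int \<lceil>18 * real k * ln (6 * real k)\<rceil>"
  proof -
    have "18 * real k * 1 \<le> 18 * real k * ln (6 * real k)"
      using ln1 kr by (intro mult_left_mono) auto
    also have "\<dots> \<le> real_of_int \<lceil>18 * real k * ln (6 * real k)\<rceil>" by (rule le_of_int_ceiling)
    finally show ?thesis by simp
  qed
  have nn: "0 \<le> real \<Delta> + real n / real k" by simp
  have "18 * real k * (real \<Delta> + real n / real k) \<le> real M"
    using mult_right_mono[OF c nn] h by linarith
  moreover have "18 * real k * (real \<Delta> + real n / real k) = 18 * real k * real \<Delta> + 18 * real n"
    using kr by (simp add: field_simps)
  ultimately have M: "18 * real k * real \<Delta> + 18 * real n \<le> real M" by simp
  have nat1: "k * (n div k) \<le> n" by (simp add: mult.commute)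
  have nat2: "k \<le> k * \<Delta>" using D by simp
  have "4 * k * (\<Delta> + (n div k + 1)) = 4 * (k * \<Delta>) + 4 * (k * (n div k)) + 4 * k"
    by (simp add: algebra_simps)
  also have "\<dots> \<le> 4 * (k * \<Delta>) + 4 * n + 4 * (k * \<Delta>)" using nat1 nat2 by linarith
  also have "\<dots> = 8 * (k * \<Delta>) + 4 * n" by simp
  finally have "real (4 * k * (\<Delta> + (n div k + 1))) \<le> real (8 * (k * \<Delta>) + 4 * n)"
    by (simp only: of_nat_le_iff)
  then have a: "real (4 * k * (\<Delta> + (n div k + 1))) \<le> 8 * (real k * real \<Delta>) + 4 * real n" by simp
  have b: "18 * (real k * real \<Delta>) + 18 * real n \<le> real M" using M by (simp add: mult.assoc)
  have "0 \<le> real k * real \<Delta>" by simp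
  then have "real (4 * k * (\<Delta> + (n div k + 1))) \<le> real M" using a b by linarith
  then show ?thesis by (simp only: of_nat_le_iff)
qed



theorem theorem1:
  fixes V :: "'a set" and L :: nat and E :: "nat \<Rightarrow> 'a set set"
    and \<Delta> k n :: nat and T :: "'a set set"
  assumes "temporal_graph V L E"
    and "card V = n"
    and "1 \<le> k" and "1 \<le> \<Delta>"
    and "delta_temporally_connected \<Delta> V L E"
    and "spanning_tree_of V (underlying_edges L E) T"
    and "real (card {i\<in>{1..L}. edge_deficient k T (E i)})
           \<ge> real_of_int \<lceil>18 * real k * ln (6 * real k)\<rceil> * (real \<Delta> + real n / real k)"
  shows "\<forall>v\<in>V. explorable_from V L E v"
proof
  fix v assume vV: "v \<in> V"
  have finV: "finite V" using assms(1) by (simp add: temporal_graph_def)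
  have tree: "is_tree V T" using assms(6) by (simp add: spanning_tree_of_def)
  have Vne: "V \<noteq> {}" and Tedges: "\<forall>e\<in>T. e \<subseteq> V \<and> card e = 2" and conn: "graph_connected V T"
    using tree by (auto simp: is_tree_def)
  have finT: "finite T"
  proof -
    have "T \<subseteq> Pow V" using Tedges by auto
    then show ?thesis using finV finite_subset by blast
  qed
  obtain w where gt: "good_tour V T w" using tour_exists[OF finV Vne conn Tedges] by blast
  have setw: "set w = V" and lenw: "length w = 2 * card V - 1" and edw: "set (edges_of w) \<subseteq> T"
    and cnt: "\<forall>e. count_list (edges_of w) e \<le> 2"
    using gt by (auto simp: good_tour_def)
  have "0 < card V" using Vne finV by (simp add: card_gt_0_iff)
  then have n1: "1 \<le> n" using assms(2) by simp
  define N where "N = length w - 1"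
  have N2: "N + 2 = 2 * n" using lenw assms(2) n1 N_def by simp
  have Nlt: "N < length w" using lenw assms(2) n1 N_def by simp
  define W where "W = n div k + 1"
  define R where "R = 4 * k"
  define P where "P = \<Delta> + W"
  define G where "G = {i\<in>{1..L}. edge_deficient k T (E i)}"
  define M where "M = card G"
  have finG: "finite G" unfolding G_def by simp
  have h7: "real M \<ge> real_of_int \<lceil>18 * real k * ln (6 * real k)\<rceil> * (real \<Delta> + real n / real k)"
    using assms(7) unfolding M_def G_def .
  have RPM: "R * P \<le> M"
    using budget[OF assms(3) assms(4) h7] unfolding R_def P_def W_def .
  have W1: "1 \<le> W" unfolding W_def by simp
  have P1: "1 \<le> P" unfolding P_def using assms(4) by simp
  have R1: "1 \<le> R" unfolding R_def using assms(3) by simp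
  define g where "g = (\<lambda>i. sorted_list_of_set G ! i)"
  have gmono: "\<And>i j. i < j \<Longrightarrow> j < M \<Longrightarrow> g i < g j"
    unfolding g_def M_def using enum_props(1)[OF finG] by blast
  have gG: "\<And>i. i < M \<Longrightarrow> g i \<in> G"
    unfolding g_def M_def using enum_props(2)[OF finG] by blast
  have gL: "\<And>i. i < M \<Longrightarrow> 1 \<le> g i \<and> g i \<le> L" using gG unfolding G_def by auto
  have gdef: "\<And>i. i < M \<Longrightarrow> card (T - E (g i)) \<le> k"
    using gG unfolding G_def edge_deficient_def by auto
  have gadd: "\<And>i d. i + d < M \<Longrightarrow> g i + d \<le> g (i + d)"
    using strict_mono_add[of M g] gmono by blast
  define tm where "tm = (\<lambda>r j. g (r * P + \<Delta> + j))"
  define F where "F = (\<lambda>r x. wpos E w (tm r) x W)"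
  have kW: "n < k * W"
  proof -
    have e: "k * (n div k) + n mod k = n" by (rule mult_div_mod_eq)
    have "n mod k < k" using assms(3) by simp
    then have "n < k * (n div k) + k" using e by linarith
    then show ?thesis unfolding W_def by (simp add: algebra_simps)
  qed
  have NkW: "N < 2 * k * W" using N2 kW by linarith
  have idx: "\<And>r j. r < R \<Longrightarrow> j < W \<Longrightarrow> r * P + \<Delta> + j < M"
  proof -
    fix r j assume r: "r < R" and j: "j < W"
    have "r * P + \<Delta> + j < r * P + P" unfolding P_def using j by simp
    also have "\<dots> = Suc r * P" by simp
    also have "\<dots> \<le> R * P" using r by (intro mult_right_mono) auto
    finally show "r * P + \<Delta> + j < M" using RPM by simp
  qed
  have bad: "card X < R" if r: "r \<in> {..<R}" and c1: "\<forall>h\<in>X. F r h < N"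
    and c2: "\<forall>h\<in>X. \<forall>h'\<in>X. h < h' \<longrightarrow> F r h < h'" for r X
  proof (rule ccontr)
    assume "\<not> card X < R"
    then have cX: "R \<le> card X" by simp
    have good: "\<forall>j<W. card (T - E (tm r j)) \<le> k"
      using idx r gdef unfolding tm_def by auto
    have sb: "W * card X + card X \<le> 2 * k * W + N"
      using stall_bound[where E=E and tm="tm r" and W=W and X=X, OF finT cnt edw good] c1 c2 unfolding F_def N_def by blast
    have a: "W * R \<le> W * card X" using cX by simp
    have e1: "W * R = 4 * (k * W)" unfolding R_def by simp
    have e2: "2 * k * W = 2 * (k * W)" by simp
    have e3: "N < 2 * (k * W)" using NkW by simp
    show False using a e1 e2 e3 sb by linarith
  qed
  have "\<exists>st. (\<forall>r. st r \<le> N) \<and> (\<forall>p. 0 \<le> p \<and> p \<le> N \<longrightarrow> (\<exists>r\<in>{..<R}. st r \<le> p \<and> p \<le> F r (st r)))"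
    by (rule greedy[where Hs = "{}"]) (use bad R1 in \<open>auto simp: F_def wpos_ge\<close>)
  then obtain st where st: "\<forall>r. st r \<le> N"
    and cover: "\<forall>p. p \<le> N \<longrightarrow> (\<exists>r\<in>{..<R}. st r \<le> p \<and> p \<le> F r (st r))" by auto
  define B where "B = (\<lambda>r. if r = 0 then 0 else g (r * P - 1))"
  have main: "\<exists>cur S. cur \<in> V \<and> reach E v 0 cur (B r) S \<and>
      (\<forall>r'<r. \<forall>p. st r' \<le> p \<and> p \<le> F r' (st r') \<longrightarrow> w ! p \<in> S)" if "r \<le> R" for r
    using that
  proof (induction r)
    case 0
    show ?case using vV unfolding B_def by (intro exI[of _ v] exI[of _ "{v}"]) (auto intro: rrefl)
  next
    case (Suc r)
    have rR: "r < R" using Suc.prems by simp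
    obtain cur S where cS: "cur \<in> V" "reach E v 0 cur (B r) S"
      "\<forall>r'<r. \<forall>p. st r' \<le> p \<and> p \<le> F r' (st r') \<longrightarrow> w ! p \<in> S"
      using Suc.IH Suc.prems by auto
    define t where "t = g (r * P)"
    have i0: "r * P + \<Delta> + 0 < M" using idx[OF rR, of 0] W1 by simp
    have rPM: "r * P < M" using i0 by simp
    have t1: "1 \<le> t" "t \<le> L" using gL[OF rPM] unfolding t_def by auto
    have iD: "r * P + (\<Delta> - 1) < M" using i0 by simp
    have tD: "t + (\<Delta> - 1) \<le> g (r * P + (\<Delta> - 1))" using gadd[OF iD] unfolding t_def .
    have tDL: "t + \<Delta> - 1 \<le> L" using tD gL[OF iD] assms(4) by simp
    have tc: "temporally_connected_on V E t (t + \<Delta> - 1)"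
      using assms(5) t1 tDL unfolding delta_temporally_connected_def by simp
    have stV: "w ! st r \<in> V" using st Nlt setw by (metis le_less_trans nth_mem)
    obtain vs ts where vt: "temporal_walk E t (t + \<Delta> - 1) vs ts" "hd vs = cur" "last vs = w ! st r"
      using tc cS(1) stV unfolding temporally_connected_on_def by blast
    have j0: "reach E cur (t - 1) (w ! st r) (t + \<Delta> - 1) (set vs)"
      using walk_to_reach[OF vt(1) t1(1)] vt(2,3) by simp
    have Br: "B r \<le> t - 1"
    proof (cases "r = 0")
      case True
      then show ?thesis unfolding B_def by simp
    next
      case False
      then have "r * P - 1 < r * P" using P1 by simp
      then have "g (r * P - 1) < t" unfolding t_def using gmono rPM by blast
      then show ?thesis unfolding B_def using False by simp
    qed
    have j1: "reach E cur (B r) (w ! st r) (t + \<Delta> - 1) (set vs)"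
      using reach_mono_down[OF j0 Br] .
    have tmono: "\<And>i j. i < j \<Longrightarrow> j < W \<Longrightarrow> tm r i < tm r j"
      unfolding tm_def using gmono idx[OF rR] by simp
    have base: "t + \<Delta> - 1 < tm r 0"
    proof -
      have "r * P + (\<Delta> - 1) < r * P + \<Delta> + 0" using assms(4) by simp
      then have "g (r * P + (\<Delta> - 1)) < g (r * P + \<Delta> + 0)" using gmono i0 by blast
      then show ?thesis using tD assms(4) unfolding tm_def by simp
    qed
    obtain S2 where S2: "reach E (w ! st r) (t + \<Delta> - 1) (w ! wpos E w (tm r) (st r) W)
        (if W = 0 then t + \<Delta> - 1 else tm r (W - 1)) S2"
      "\<forall>p. st r \<le> p \<and> p \<le> wpos E w (tm r) (st r) W \<longrightarrow> w ! p \<in> S2"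
      using walker_reach[of W "tm r" "t + \<Delta> - 1" W E w "st r", OF tmono base] by blast
    have eqB: "tm r (W - 1) = B (Suc r)"
    proof -
      have "r * P + \<Delta> + (W - 1) = Suc r * P - 1" unfolding P_def using W1 by simp
      then show ?thesis unfolding tm_def B_def by simp
    qed
    have j2: "reach E (w ! st r) (t + \<Delta> - 1) (w ! F r (st r)) (B (Suc r)) S2"
      using S2(1) W1 eqB unfolding F_def by simp
    have all: "reach E v 0 (w ! F r (st r)) (B (Suc r)) (S \<union> set vs \<union> S2)"
      using reach_trans[OF j2 reach_trans[OF j1 cS(2)]] .
    have FV: "w ! F r (st r) \<in> V"
    proof -
      have "F r (st r) \<le> N" unfolding F_def N_def using wpos_le st N_def by metis
      then show ?thesis using Nlt setw by (metis le_less_trans nth_mem)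
    qed
    have cov: "\<forall>r'<Suc r. \<forall>p. st r' \<le> p \<and> p \<le> F r' (st r') \<longrightarrow> w ! p \<in> S \<union> set vs \<union> S2"
    proof (intro allI impI)
      fix r' p assume r': "r' < Suc r" and p: "st r' \<le> p \<and> p \<le> F r' (st r')"
      show "w ! p \<in> S \<union> set vs \<union> S2"
      proof (cases "r' = r")
        case True
        then show ?thesis using S2(2) p unfolding F_def by blast
      next
        case False
        then have "r' < r" using r' by simp
        then show ?thesis using cS(3) p by blast
      qed
    qed
    show ?case using FV all cov by blast
  qed
  obtain cur S where cS: "cur \<in> V" "reach E v 0 cur (B R) S"
    "\<forall>r'<R. \<forall>p. st r' \<le> p \<and> p \<le> F r' (st r') \<longrightarrow> w ! p \<in> S"
    using main[of R] by auto
  have VS: "V \<subseteq> S"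
  proof
    fix y assume "y \<in> V"
    then obtain p where p: "p < length w" "w ! p = y" using setw by (metis in_set_conv_nth)
    then have "p \<le> N" unfolding N_def by simp
    then obtain r where "r \<in> {..<R}" "st r \<le> p \<and> p \<le> F r (st r)" using cover by blast
    then show "y \<in> S" using cS(3) p by auto
  qed
  obtain vs ts where vt: "temporal_walk E (Suc 0) (B R) vs ts" "hd vs = v" "last vs = cur" "set vs = S"
    using reach_to_walk[OF cS(2)] by blast
  have BL: "B R \<le> L"
  proof -
    have "R * P - 1 < M" using RPM R1 P1 by (metis One_nat_def diff_less le_trans less_le_trans mult_le_mono nat_mult_1 zero_less_one)
    then show ?thesis unfolding B_def using gL R1 by auto
  qed
  have tw: "temporal_walk E 1 L vs ts" using walk_weaken[OF vt(1) BL] by simp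
  have "set vs \<subseteq> V" using walk_in_V[OF assms(1) tw] vt(2) vV by simp
  then have "set vs = V" using VS vt(4) by blast
  moreover have "length ts \<le> L" using walk_len[OF tw] .
  ultimately show "explorable_from V L E v" unfolding explorable_from_def using tw vt(2) by blast
qed

end
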